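(* Let $s\in[-\infty,0]$, let $\rho,\rho'$ be $2\times2$ density matrices with $\mathrm{Tr}[\rho^2]=\mathrm{Tr}[\rho'^2]$, and let $X,X'$ be nonzero $2\times 2$ Hermitian matrices with $[\rho',X']\neq 0$. Let $\{|\psi_1\rangle,|\psi_2\rangle\}$ and $\{|\psi'_1\rangle,|\psi'_2\rangle\}$ be orthonormal eigenbases of $\rho$ and $\rho'$ respectively, with eigenvalues in descending order. Then $I^s(\rho,X)=\eta\, I^s(\rho',X')$, where $\eta=\dfrac{|\langle\psi_1|X|\psi_2\rangle|^2}{|\langle\psi'_1|X'|\psi'_2\rangle|^2}$.
   Context: For a density matrix $\rho=\sum_{i}\lambda_i|\psi_i\rangle\langle\psi_i|$ on $\mathbb{C}^d$ (orthonormal eigenbasis, $\lambda_1\ge\cdots\ge\lambda_d\ge0$): for $-\infty<s<0$ and $a_1,a_2>0$ let $m_s(a_1,a_2)=\left(\frac{a_1^s+a_2^s}{2}\right)^{1/s}$; $m_0(a_1,a_2)=\sqrt{a_1a_2}$; $m_{-\infty}(a_1,a_2)=\min\{a_1,a_2\}$; and $m_s(a,0)=m_s(0,a)=m_s(0,0)=0$. Define $\zeta_\rho^s(X,Y)=\mathrm{Tr}[\rho X^\dagger Y]-\sum_{i,j} m_s(\lambda_i,\lambda_j)\langle\psi_i|X^\dagger|\psi_j\rangle\langle\psi_j|Y|\psi_i\rangle$ and $I^s(\rho,X)=\zeta_\rho^s(X,X)$. *)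

theory Defs
  imports "HOL-Analysis.Analysis"
begin

type_synonym cmat2 = "complex ^ 2 ^ 2"
type_synonym cvec2 = "complex ^ 2"

definition adj :: "cmat2 \<Rightarrow> cmat2" where
  "adj A = (\<chi> i j. cnj (A $ j $ i))"

definition tr :: "cmat2 \<Rightarrow> complex" where
  "tr A = (\<Sum>i\<in>UNIV. A $ i $ i)"

definition braket :: "cvec2 \<Rightarrow> cvec2 \<Rightarrow> complex" where
  "braket u v = (\<Sum>k\<in>UNIV. cnj (u $ k) * v $ k)"

definition hermitian :: "cmat2 \<Rightarrow> bool" where
  "hermitian A \<longleftrightarrow> adj A = A"

definition density_matrix :: "cmat2 \<Rightarrow> bool" where
  "density_matrix \<rho> \<longleftrightarrow> hermitian \<rho> \<and> (\<forall>v. Re (braket v (\<rho> *v v)) \<ge> 0) \<and> tr \<rho> = 1"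

definition ordered_eigenbasis :: "cmat2 \<Rightarrow> (nat \<Rightarrow> real) \<Rightarrow> (nat \<Rightarrow> cvec2) \<Rightarrow> bool" where
  "ordered_eigenbasis \<rho> lam psi \<longleftrightarrow>
     (\<forall>i\<in>{1,2}. \<forall>j\<in>{1,2}. braket (psi i) (psi j) = (if i = j then 1 else 0)) \<and>
     (\<forall>i\<in>{1,2}. \<rho> *v psi i = complex_of_real (lam i) *s psi i) \<and>
     lam 1 \<ge> lam 2"

definition mean_s :: "ereal \<Rightarrow> real \<Rightarrow> real \<Rightarrow> real" where
  "mean_s s a1 a2 =
     (if a1 = 0 \<or> a2 = 0 then 0
      else if s = -\<infinity> then min a1 a2
      else if s = 0 then sqrt (a1 * a2)
      else ((a1 powr real_of_ereal s + a2 powr real_of_ereal s) / 2) powr (1 / real_of_ereal s))"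

definition zeta_s :: "ereal \<Rightarrow> cmat2 \<Rightarrow> (nat \<Rightarrow> real) \<Rightarrow> (nat \<Rightarrow> cvec2) \<Rightarrow> cmat2 \<Rightarrow> cmat2 \<Rightarrow> complex" where
  "zeta_s s \<rho> lam psi X Y =
     tr (\<rho> ** adj X ** Y)
     - (\<Sum>i\<in>{1::nat,2}. \<Sum>j\<in>{1::nat,2}.
          complex_of_real (mean_s s (lam i) (lam j))
          * braket (psi i) (adj X *v psi j) * braket (psi j) (Y *v psi i))"

definition I_s :: "ereal \<Rightarrow> cmat2 \<Rightarrow> (nat \<Rightarrow> real) \<Rightarrow> (nat \<Rightarrow> cvec2) \<Rightarrow> cmat2 \<Rightarrow> complex" where
  "I_s s \<rho> lam psi X = zeta_s s \<rho> lam psi X X"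

end

theory Submission imports Defs begin

lemma braket_adj: "braket u (A *v w) = braket (adj A *v u) w"
  unfolding braket_def adj_def matrix_vector_mult_def
  by (simp add: sum_2 algebra_simps)

lemma braket_cnj: "braket v u = cnj (braket u v)"
  unfolding braket_def by (simp add: sum_2 mult.commute)

lemma braket_lin: "braket u (a *s x + b *s y) = a * braket u x + b * braket u y"
  unfolding braket_def by (simp add: sum_2 algebra_simps)

lemma braket_scal_left: "braket (a *s x) y = cnj a * braket x y"
  unfolding braket_def by (simp add: sum_2 algebra_simps)

lemma complete_coord:
  assumes "braket u u = 1" "braket v v = 1" "braket u v = 0"
  shows "\<And>a b. u $ a * cnj (u $ b) + v $ a * cnj (v $ b) = (if a = b then 1 else 0)"
proof -
  have vu: "braket v u = 0" using assms(3) braket_cnj by (metis complex_cnj_zero)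
  define B :: cmat2 where "B = (\<chi> i k. cnj ((if i = 1 then u else v) $ k))"
  define C :: cmat2 where "C = (\<chi> k j. (if j = 1 then u else v) $ k)"
  have "B ** C = mat 1"
    using assms vu unfolding B_def C_def matrix_matrix_mult_def mat_def braket_def
    by (simp add: vec_eq_iff forall_2 sum_2)
  hence "C ** B = mat 1" using matrix_left_right_inverse by blast
  hence "\<And>a b. (C ** B) $ a $ b = mat 1 $ a $ b" by simp
  thus "\<And>a b. u $ a * cnj (u $ b) + v $ a * cnj (v $ b) = (if a = b then 1 else 0)"
    unfolding B_def C_def matrix_matrix_mult_def mat_def by (simp add: sum_2)
qed

lemma complete:
  assumes "braket u u = 1" "braket v v = 1" "braket u v = 0"
  shows "w = braket u w *s u + braket v w *s v"
proof -
  note c = complete_coord[OF assms]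
  have "\<And>a. w $ a = (braket u w *s u + braket v w *s v) $ a"
  proof -
    fix a
    have "(braket u w *s u + braket v w *s v) $ a = (\<Sum>b\<in>UNIV. w $ b * (u $ a * cnj (u $ b) + v $ a * cnj (v $ b)))"
      unfolding braket_def by (simp add: sum_2 algebra_simps)
    also have "\<dots> = w $ a" by (simp add: c sum_2 ; metis exhaust_2 one_neq_zero)
    finally show "w $ a = (braket u w *s u + braket v w *s v) $ a" by simp
  qed
  thus ?thesis by (simp add: vec_eq_iff)
qed

lemma tr_basis:
  assumes "braket u u = 1" "braket v v = 1" "braket u v = 0"
  shows "tr A = braket u (A *v u) + braket v (A *v v)"
proof -
  note c = complete_coord[OF assms]
  have "braket u (A *v u) + braket v (A *v v) =
     (\<Sum>a\<in>UNIV. \<Sum>b\<in>UNIV. A $ a $ b * (u $ b * cnj (u $ a) + v $ b * cnj (v $ a)))"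
    unfolding braket_def matrix_vector_mult_def by (simp add: sum_2 algebra_simps)
  also have "\<dots> = tr A" unfolding tr_def using c by (simp add: sum_2)
  finally show ?thesis by simp
qed

lemma parseval:
  assumes "braket u u = 1" "braket v v = 1" "braket u v = 0"
  shows "braket w w = complex_of_real ((cmod (braket u w))\<^sup>2 + (cmod (braket v w))\<^sup>2)"
proof -
  have "braket w w = braket w (braket u w *s u + braket v w *s v)"
    using complete[OF assms] by metis
  also have "\<dots> = braket u w * cnj (braket u w) + braket v w * cnj (braket v w)"
    by (simp add: braket_lin braket_cnj[of w u] braket_cnj[of w v])
  also have "\<dots> = complex_of_real ((cmod (braket u w))\<^sup>2 + (cmod (braket v w))\<^sup>2)"
    by (simp only: of_real_add complex_norm_square)
  finally show ?thesis .
qed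

lemma mean_sym: "mean_s s a b = mean_s s b a"
  unfolding mean_s_def by (simp add: min.commute mult.commute add.commute)

lemma mean_diag: assumes "s \<le> 0" "a \<ge> 0" shows "mean_s s a a = a"
proof -
  consider "a = 0" | "a > 0" "s = -\<infinity>" | "a > 0" "s = 0" | "a > 0" "s \<noteq> 0" "s \<noteq> -\<infinity>"
    using assms by force
  then show ?thesis
  proof cases
    case 4
    then obtain r where r: "s = ereal r" "r \<noteq> 0" using assms(1) by (cases s) auto
    have "((a powr r + a powr r) / 2) powr (1 / r) = (a powr r) powr (1/r)" by simp
    also have "\<dots> = a" using r 4 by (simp add: powr_powr)
    finally show ?thesis using 4 r unfolding mean_s_def by simp
  qed (auto simp: mean_s_def)
qed

lemma adj_adj: "adj (adj A) = A"
  unfolding adj_def by (simp add: vec_eq_iff)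

lemma I_formula:
  assumes s: "s \<le> 0" and dm: "density_matrix \<rho>" and hX: "hermitian X"
    and eb: "ordered_eigenbasis \<rho> lam psi"
  shows "I_s s \<rho> lam psi X = complex_of_real ((lam 1 + lam 2 - 2 * mean_s s (lam 1) (lam 2))
            * (cmod (braket (psi 1) (X *v psi 2)))\<^sup>2)"
    and "lam 1 \<ge> 0" "lam 2 \<ge> 0"
proof -
  have o11: "braket (psi 1) (psi 1) = 1" and o22: "braket (psi 2) (psi 2) = 1"
    and o12: "braket (psi 1) (psi 2) = 0"
    using eb unfolding ordered_eigenbasis_def by auto
  have ev: "\<And>i. i \<in> {1,2} \<Longrightarrow> \<rho> *v psi i = complex_of_real (lam i) *s psi i"
    using eb unfolding ordered_eigenbasis_def by auto
  have ar: "adj \<rho> = \<rho>" using dm unfolding density_matrix_def hermitian_def by auto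
  have aX: "adj X = X" using hX unfolding hermitian_def by auto
  have nrm: "\<And>i. i \<in> {1,2} \<Longrightarrow> braket (psi i) (psi i) = 1" using o11 o22 by auto
  have lampos: "\<And>i. i \<in> {1,2} \<Longrightarrow> lam i \<ge> 0"
  proof -
    fix i :: nat assume i: "i \<in> {1,2}"
    have "Re (braket (psi i) (\<rho> *v psi i)) \<ge> 0" using dm unfolding density_matrix_def by auto
    moreover have "braket (psi i) (\<rho> *v psi i) = complex_of_real (lam i)"
      using ev[OF i] nrm[OF i] by (simp add: braket_lin[of _ _ _ 0 "psi i", simplified])
    ultimately show "lam i \<ge> 0" by simp
  qed
  thus "lam 1 \<ge> 0" "lam 2 \<ge> 0" by auto
  define x where "x = (\<lambda>i j. braket (psi i) (X *v psi j))"
  have key: "\<And>i. i \<in> {1,2} \<Longrightarrow> braket (psi i) ((\<rho> ** adj X ** X) *v psi i)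
       = complex_of_real (lam i * ((cmod (x 1 i))\<^sup>2 + (cmod (x 2 i))\<^sup>2))"
  proof -
    fix i :: nat assume i: "i \<in> {1,2}"
    have "braket (psi i) ((\<rho> ** adj X ** X) *v psi i) = braket (psi i) (\<rho> *v (adj X *v (X *v psi i)))"
      by (simp add: matrix_vector_mul_assoc matrix_mul_assoc)
    also have "\<dots> = braket (\<rho> *v psi i) (adj X *v (X *v psi i))"
      using braket_adj ar by metis
    also have "\<dots> = complex_of_real (lam i) * braket (psi i) (adj X *v (X *v psi i))"
      using ev[OF i] by (simp add: braket_scal_left)
    also have "braket (psi i) (adj X *v (X *v psi i)) = braket (X *v psi i) (X *v psi i)"
      using braket_adj adj_adj by metis
    also have "\<dots> = complex_of_real ((cmod (x 1 i))\<^sup>2 + (cmod (x 2 i))\<^sup>2)"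
      unfolding x_def using parseval[OF o11 o22 o12] by blast
    finally show "braket (psi i) ((\<rho> ** adj X ** X) *v psi i)
       = complex_of_real (lam i * ((cmod (x 1 i))\<^sup>2 + (cmod (x 2 i))\<^sup>2))" by simp
  qed
  have cross: "\<And>i j. braket (psi i) (adj X *v psi j) * braket (psi j) (X *v psi i)
       = complex_of_real ((cmod (x j i))\<^sup>2)"
  proof -
    fix i j
    have "braket (psi i) (adj X *v psi j) = cnj (x j i)"
      unfolding x_def using braket_adj adj_adj braket_cnj by metis
    thus "braket (psi i) (adj X *v psi j) * braket (psi j) (X *v psi i)
       = complex_of_real ((cmod (x j i))\<^sup>2)"
      unfolding x_def by (metis complex_norm_square mult.commute)
  qed
  have herm: "cmod (x 2 1) = cmod (x 1 2)"
  proof -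
    have "x 1 2 = cnj (x 2 1)" unfolding x_def using braket_adj aX braket_cnj by metis
    thus ?thesis by simp
  qed
  have m11: "mean_s s (lam 1) (lam 1) = lam 1" using mean_diag s lampos by auto
  have m22: "mean_s s (lam 2) (lam 2) = lam 2" using mean_diag s lampos by auto
  have tr: "tr (\<rho> ** adj X ** X) = braket (psi 1) ((\<rho> ** adj X ** X) *v psi 1)
     + braket (psi 2) ((\<rho> ** adj X ** X) *v psi 2)"
    using tr_basis[OF o11 o22 o12] by blast
  show "I_s s \<rho> lam psi X = complex_of_real ((lam 1 + lam 2 - 2 * mean_s s (lam 1) (lam 2))
            * (cmod (braket (psi 1) (X *v psi 2)))\<^sup>2)"
  proof -
    define m where "m = (\<lambda>i j. mean_s s (lam i) (lam j))"
    define a where "a = (\<lambda>i j. (cmod (x i j))\<^sup>2)"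
    have "I_s s \<rho> lam psi X = complex_of_real (lam 1 * (a 1 1 + a 2 1) + lam 2 * (a 1 2 + a 2 2)
       - (m 1 1 * a 1 1 + m 1 2 * a 2 1 + m 2 1 * a 1 2 + m 2 2 * a 2 2))"
    proof -
      have se: "(\<Sum>i\<in>{1::nat,2}. \<Sum>j\<in>{1::nat,2}.
          complex_of_real (mean_s s (lam i) (lam j))
          * braket (psi i) (adj X *v psi j) * braket (psi j) (X *v psi i))
          = (\<Sum>i\<in>{1::nat,2}. \<Sum>j\<in>{1::nat,2}. complex_of_real (m i j * a j i))"
        by (intro sum.cong refl) (simp only: mult.assoc cross m_def a_def of_real_mult)
      show ?thesis unfolding I_s_def zeta_s_def tr se by (simp add: key a_def algebra_simps)
    qed
    also have "lam 1 * (a 1 1 + a 2 1) + lam 2 * (a 1 2 + a 2 2)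
       - (m 1 1 * a 1 1 + m 1 2 * a 2 1 + m 2 1 * a 1 2 + m 2 2 * a 2 2)
       = (lam 1 + lam 2 - 2 * mean_s s (lam 1) (lam 2)) * (cmod (braket (psi 1) (X *v psi 2)))\<^sup>2"
      unfolding m_def a_def using herm m11 m22 mean_sym[of s "lam 2" "lam 1"]
      by (simp add: x_def algebra_simps)
    finally show ?thesis .
  qed
qed

lemma eig_traces:
  assumes dm: "density_matrix \<rho>" and eb: "ordered_eigenbasis \<rho> lam psi"
  shows "lam 1 + lam 2 = 1" "tr (\<rho> ** \<rho>) = complex_of_real ((lam 1)\<^sup>2 + (lam 2)\<^sup>2)"
proof -
  have o11: "braket (psi 1) (psi 1) = 1" and o22: "braket (psi 2) (psi 2) = 1"
    and o12: "braket (psi 1) (psi 2) = 0"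
    using eb unfolding ordered_eigenbasis_def by auto
  have ev: "\<And>i. i \<in> {1,2} \<Longrightarrow> \<rho> *v psi i = complex_of_real (lam i) *s psi i"
    using eb unfolding ordered_eigenbasis_def by auto
  have nrm: "\<And>i. i \<in> {1,2} \<Longrightarrow> braket (psi i) (psi i) = 1" using o11 o22 by auto
  have e1: "\<And>i. i \<in> {1,2} \<Longrightarrow> braket (psi i) (\<rho> *v psi i) = complex_of_real (lam i)"
    using ev nrm by (simp add: braket_lin[of _ _ _ 0 "psi _", simplified])
  have e2: "\<And>i. i \<in> {1,2} \<Longrightarrow> braket (psi i) ((\<rho> ** \<rho>) *v psi i) = complex_of_real ((lam i)\<^sup>2)"
  proof -
    fix i :: nat assume i: "i \<in> {1,2}"
    have "(\<rho> ** \<rho>) *v psi i = complex_of_real ((lam i)\<^sup>2) *s psi i"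
      using ev[OF i] by (simp add: matrix_vector_mul_assoc[symmetric] vector_scalar_commute power2_eq_square)
    thus "braket (psi i) ((\<rho> ** \<rho>) *v psi i) = complex_of_real ((lam i)\<^sup>2)"
      using nrm[OF i] by (simp add: braket_lin[of _ _ _ 0 "psi i", simplified])
  qed
  have "tr \<rho> = 1" using dm unfolding density_matrix_def by auto
  thus "lam 1 + lam 2 = 1" using tr_basis[OF o11 o22 o12, of \<rho>] e1
    by (metis insertCI of_real_add of_real_eq_1_iff)
  show "tr (\<rho> ** \<rho>) = complex_of_real ((lam 1)\<^sup>2 + (lam 2)\<^sup>2)"
    using tr_basis[OF o11 o22 o12, of "\<rho> ** \<rho>"] e2 by simp
qed

lemma commute_nonzero:
  assumes hX: "hermitian X" and eb: "ordered_eigenbasis \<rho> lam psi"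
    and nc: "\<rho> ** X - X ** \<rho> \<noteq> 0"
  shows "braket (psi 1) (X *v psi 2) \<noteq> 0"
proof
  assume x0: "braket (psi 1) (X *v psi 2) = 0"
  have o11: "braket (psi 1) (psi 1) = 1" and o22: "braket (psi 2) (psi 2) = 1"
    and o12: "braket (psi 1) (psi 2) = 0"
    using eb unfolding ordered_eigenbasis_def by auto
  have ev: "\<And>i. i \<in> {1,2} \<Longrightarrow> \<rho> *v psi i = complex_of_real (lam i) *s psi i"
    using eb unfolding ordered_eigenbasis_def by auto
  have aX: "adj X = X" using hX unfolding hermitian_def by auto
  have x0': "braket (psi 2) (X *v psi 1) = 0"
    using x0 braket_adj aX braket_cnj by (metis complex_cnj_zero_iff)
  note cpl = complete[OF o11 o22 o12]
  have Xe1: "X *v psi 1 = braket (psi 1) (X *v psi 1) *s psi 1"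
    using cpl[of "X *v psi 1"] x0' by simp
  have Xe2: "X *v psi 2 = braket (psi 2) (X *v psi 2) *s psi 2"
    using cpl[of "X *v psi 2"] x0 by simp
  define M where "M = \<rho> ** X - X ** \<rho>"
  have M1: "M *v psi 1 = 0"
  proof -
    have "M *v psi 1 = \<rho> *v (X *v psi 1) - X *v (\<rho> *v psi 1)"
      unfolding M_def by (simp add: matrix_vector_mult_diff_rdistrib matrix_vector_mul_assoc)
    also have "\<dots> = 0"
    proof -
      define c where "c = braket (psi 1) (X *v psi 1)"
      have "\<rho> *v (X *v psi 1) = (c * complex_of_real (lam 1)) *s psi 1"
        unfolding Xe1[folded c_def] using ev[of 1] by (simp add: vector_scalar_commute vector_smult_assoc)
      moreover have "X *v (\<rho> *v psi 1) = (c * complex_of_real (lam 1)) *s psi 1"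
        using ev[of 1] Xe1[folded c_def] by (simp add: vector_scalar_commute vector_smult_assoc mult.commute)
      ultimately show ?thesis by simp
    qed
    finally show ?thesis .
  qed
  have M2: "M *v psi 2 = 0"
  proof -
    have "M *v psi 2 = \<rho> *v (X *v psi 2) - X *v (\<rho> *v psi 2)"
      unfolding M_def by (simp add: matrix_vector_mult_diff_rdistrib matrix_vector_mul_assoc)
    also have "\<dots> = 0"
    proof -
      define c where "c = braket (psi 2) (X *v psi 2)"
      have "\<rho> *v (X *v psi 2) = (c * complex_of_real (lam 2)) *s psi 2"
        unfolding Xe2[folded c_def] using ev[of 2] by (simp add: vector_scalar_commute vector_smult_assoc)
      moreover have "X *v (\<rho> *v psi 2) = (c * complex_of_real (lam 2)) *s psi 2"
        using ev[of 2] Xe2[folded c_def] by (simp add: vector_scalar_commute vector_smult_assoc mult.commute)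
      ultimately show ?thesis by simp
    qed
    finally show ?thesis .
  qed
  have "\<And>w. M *v w = 0 *v w"
  proof -
    fix w
    have "M *v w = M *v (braket (psi 1) w *s psi 1 + braket (psi 2) w *s psi 2)"
      using cpl by metis
    also have "\<dots> = 0" by (simp only: matrix_vector_right_distrib vector_scalar_commute M1 M2) simp
    finally show "M *v w = 0 *v w" by simp
  qed
  hence "M = 0" using matrix_eq by blast
  thus False using nc M_def by simp
qed

theorem theorem3:
  fixes s :: ereal and \<rho> \<rho>' X X' :: cmat2
    and lam lam' :: "nat \<Rightarrow> real" and psi psi' :: "nat \<Rightarrow> cvec2"
  assumes "s \<le> 0"
    and "density_matrix \<rho>" and "density_matrix \<rho>'"
    and "tr (\<rho> ** \<rho>) = tr (\<rho>' ** \<rho>')"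
    and "hermitian X" and "X \<noteq> 0" and "hermitian X'" and "X' \<noteq> 0"
    and "\<rho>' ** X' - X' ** \<rho>' \<noteq> 0"
    and "ordered_eigenbasis \<rho> lam psi" and "ordered_eigenbasis \<rho>' lam' psi'"
  shows "I_s s \<rho> lam psi X =
     complex_of_real ((cmod (braket (psi 1) (X *v psi 2)))\<^sup>2 / (cmod (braket (psi' 1) (X' *v psi' 2)))\<^sup>2)
     * I_s s \<rho>' lam' psi' X'"
proof -
  note F = I_formula[OF assms(1) assms(2) assms(5) assms(10)]
  note F' = I_formula[OF assms(1) assms(3) assms(7) assms(11)]
  note T = eig_traces[OF assms(2) assms(10)]
  note T' = eig_traces[OF assms(3) assms(11)]
  have sq: "(lam 1)\<^sup>2 + (lam 2)\<^sup>2 = (lam' 1)\<^sup>2 + (lam' 2)\<^sup>2"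
    using T(2) T'(2) assms(4) of_real_eq_iff by metis
  have o1: "lam 1 \<ge> lam 2" "lam' 1 \<ge> lam' 2"
    using assms(10,11) unfolding ordered_eigenbasis_def by auto
  have "(lam 1 - lam 2)\<^sup>2 = (lam' 1 - lam' 2)\<^sup>2"
  proof -
    have "(lam 1 - lam 2)\<^sup>2 = 2 * ((lam 1)\<^sup>2 + (lam 2)\<^sup>2) - (lam 1 + lam 2)\<^sup>2"
      by (simp add: power2_eq_square algebra_simps)
    also have "\<dots> = 2 * ((lam' 1)\<^sup>2 + (lam' 2)\<^sup>2) - (lam' 1 + lam' 2)\<^sup>2"
      using sq T(1) T'(1) by simp
    also have "\<dots> = (lam' 1 - lam' 2)\<^sup>2" by (simp add: power2_eq_square algebra_simps)
    finally show ?thesis .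
  qed
  hence "lam 1 - lam 2 = lam' 1 - lam' 2" using o1 power2_eq_iff_nonneg by simp
  hence l1: "lam 1 = lam' 1" and l2: "lam 2 = lam' 2" using T(1) T'(1) by linarith+
  have nz: "(cmod (braket (psi' 1) (X' *v psi' 2)))\<^sup>2 \<noteq> 0"
    using commute_nonzero[OF assms(7) assms(11) assms(9)] by simp
  show ?thesis unfolding F(1) F'(1) l1 l2 using nz
    by (simp only: of_real_mult[symmetric]) (simp add: field_simps)
qed

end
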